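(* Consider the perturbed system $\dot x = f(x)+\psi(x)$, where $f,\psi:\mathbb R^n\to\mathbb R^n$ are continuous, $f(0)=0$, solutions exist and are unique, and there exists $L>0$ such that $\|\psi(x)\|\leq L\|x\|$ for all $x\in\mathbb R^n$. Suppose the origin of the nominal system $\dot x = f(x)$ is fixed-time stable, and that there exists a continuously differentiable, positive definite, radially unbounded function $V:\mathbb R^n\to\mathbb R$ such that, along trajectories of the nominal system, $\dot V(x)\leq -aV(x)^p - bV(x)^q$ for all $x\neq 0$, with $a,b>0$, $0<p<1$, $q>1$. Assume further that there exist $k_1,k_2>0$ such that $V(x)\geq k_1\|x\|^2$ and $\left\|\frac{\partial V}{\partial x}(x)\right\|\leq k_2\|x\|$ for all $x\in\mathbb R^n$. Then the origin of the perturbed system $\dot x = f(x)+\psi(x)$ is fixed-time stable.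
   Context: $\|\cdot\|$ is the Euclidean norm. Fixed-time stability (FxTS) of the origin is understood as: there is a neighborhood $D$ of the origin (possibly all of $\mathbb R^n$) such that every trajectory starting in $D$ reaches the origin (and stays there) within a time $T$ bounded by a constant independent of the initial condition in $D$. *)

theory Defs
  imports "HOL-Analysis.Analysis"
begin

definition is_solution :: "(real^'n \<Rightarrow> real^'n) \<Rightarrow> real^'n \<Rightarrow> (real \<Rightarrow> real^'n) \<Rightarrow> bool" where
  "is_solution F x0 x \<longleftrightarrow> x 0 = x0 \<and>
     (\<forall>t\<ge>0. (x has_vector_derivative F (x t)) (at t within {0..}))"

definition exist_unique_solutions :: "(real^'n \<Rightarrow> real^'n) \<Rightarrow> bool" where
  "exist_unique_solutions F \<longleftrightarrow>
     (\<forall>x0. \<exists>x. is_solution F x0 x) \<and>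
     (\<forall>x0 x y. is_solution F x0 x \<longrightarrow> is_solution F x0 y \<longrightarrow> (\<forall>t\<ge>0. x t = y t))"

definition fixed_time_stable :: "(real^'n \<Rightarrow> real^'n) \<Rightarrow> bool" where
  "fixed_time_stable F \<longleftrightarrow>
     (\<exists>D T. open D \<and> 0 \<in> D \<and>
        (\<forall>x0\<in>D. \<forall>x. is_solution F x0 x \<longrightarrow>
            (\<exists>t\<in>{0..T}. \<forall>s\<ge>t. x s = 0)))"

end

theory Submission
  imports Defs
begin

lemma nonincr_lemma:
  fixes g D :: "real \<Rightarrow> real"
  assumes "u \<le> v" "continuous_on {u..v} g"
    and "\<And>t. u < t \<Longrightarrow> t < v \<Longrightarrow> (g has_real_derivative D t) (at t)"
    and "\<And>t. u < t \<Longrightarrow> t < v \<Longrightarrow> D t \<le> 0"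
  shows "g v \<le> g u"
proof (cases "u = v")
  case False
  hence "u < v" using assms by simp
  have d: "\<And>t. u < t \<Longrightarrow> t < v \<Longrightarrow> (g has_derivative (\<lambda>h. D t * h)) (at t)"
    using assms(3) unfolding has_field_derivative_def by simp
  obtain z where "u < z" "z < v" "g v - g u = D z * (v - u)"
    using mvt[OF \<open>u<v\<close> assms(2) d] by blast
  moreover have "D z \<le> 0" using assms(4) \<open>u<z\<close> \<open>z<v\<close> by simp
  moreover have "D z * (v - u) \<le> 0" using \<open>D z \<le> 0\<close> \<open>u<v\<close> by (simp add: mult_nonpos_nonneg)
  ultimately show ?thesis by linarith
qed simp

theorem corollary1:
  fixes f \<psi> :: "real^'n \<Rightarrow> real^'n"
    and V :: "real^'n \<Rightarrow> real"
    and gradV :: "real^'n \<Rightarrow> real^'n"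
    and L a b p q k1 k2 :: real
  assumes f_cont: "continuous_on UNIV f"
    and psi_cont: "continuous_on UNIV \<psi>"
    and f0: "f 0 = 0"
    and sol_nom: "exist_unique_solutions f"
    and sol_pert: "exist_unique_solutions (\<lambda>x. f x + \<psi> x)"
    and L_pos: "L > 0"
    and psi_bound: "\<forall>x. norm (\<psi> x) \<le> L * norm x"
    and nom_fxts: "fixed_time_stable f"
    and V_deriv: "\<forall>x. (V has_derivative (\<lambda>h. gradV x \<bullet> h)) (at x)"
    and gradV_cont: "continuous_on UNIV gradV"
    and V_pd: "V 0 = 0" "\<forall>x. x \<noteq> 0 \<longrightarrow> V x > 0"
    and V_rad_unbdd: "filterlim V at_top at_infinity"
    and abpq: "a > 0" "b > 0" "0 < p" "p < 1" "q > 1"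
    and V_decay: "\<forall>x. x \<noteq> 0 \<longrightarrow> gradV x \<bullet> f x \<le> - a * V x powr p - b * V x powr q"
    and k12: "k1 > 0" "k2 > 0"
    and V_lower: "\<forall>x. V x \<ge> k1 * (norm x)\<^sup>2"
    and gradV_bound: "\<forall>x. norm (gradV x) \<le> k2 * norm x"
  shows "fixed_time_stable (\<lambda>x. f x + \<psi> x)"
proof -
  define K where "K = k2 * L / k1"
  have K_pos: "K > 0" unfolding K_def using k12 L_pos by simp
  define \<delta> where "\<delta> = (a / (2*K)) powr (1 / (1 - p))"
  have \<delta>_pos: "\<delta> > 0" unfolding \<delta>_def using K_pos abpq by simp
  have \<delta>p: "\<delta> powr (1 - p) = a / (2*K)"
    unfolding \<delta>_def powr_powr using abpq K_pos by simp
  define c where "c = (1 - p) * a / 2"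
  have c_pos: "c > 0" unfolding c_def using abpq by simp
  define T where "T = \<delta> powr (1 - p) / c"
  have T_pos: "T > 0" unfolding T_def using \<delta>_pos c_pos by simp
  have cT: "c * T = \<delta> powr (1 - p)" unfolding T_def using c_pos by simp
  have V_nonneg: "V y \<ge> 0" for y
  proof -
    have "k1 * (norm y)\<^sup>2 \<ge> 0" using k12 by simp
    thus "V y \<ge> 0" using V_lower[rule_format, of y] by linarith
  qed
  have contV: "continuous_on UNIV V"
  proof (rule continuous_at_imp_continuous_on, intro ballI)
    fix x :: "real^'n"
    show "isCont V x" using has_derivative_continuous[OF V_deriv[rule_format, of x]] .
  qed
  have g0: "gradV 0 = 0" using gradV_bound[rule_format, of 0] by simp
  have keyD: "gradV y \<bullet> (f y + \<psi> y) \<le> - (a/2) * V y powr p" if "V y < \<delta>" for y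
  proof (cases "y = 0")
    case True
    then show ?thesis using g0 V_pd by simp
  next
    case False
    have Vy: "V y > 0" using V_pd False by simp
    have "gradV y \<bullet> \<psi> y \<le> norm (gradV y) * norm (\<psi> y)" by (rule norm_cauchy_schwarz)
    also have "\<dots> \<le> (k2 * norm y) * (L * norm y)"
      using gradV_bound[rule_format, of y] psi_bound[rule_format, of y]
      using k12 by (intro mult_mono) auto
    also have "\<dots> = (k2 * L / k1) * (k1 * (norm y)\<^sup>2)"
      using k12 by (simp add: power2_eq_square field_simps)
    also have "\<dots> \<le> K * V y" unfolding K_def
      using V_lower[rule_format, of y] K_pos K_def by (intro mult_left_mono) auto
    finally have h1: "gradV y \<bullet> \<psi> y \<le> K * V y" .
    have "V y = V y powr (1 - p) * V y powr p"
      using Vy by (simp add: powr_add[symmetric])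
    moreover have "V y powr (1 - p) \<le> a / (2*K)"
      using powr_mono2[of "1-p" "V y" \<delta>] that Vy abpq \<delta>p by simp
    ultimately have "K * V y \<le> K * ((a / (2*K)) * V y powr p)"
    proof -
      assume e: "V y = V y powr (1 - p) * V y powr p" and l: "V y powr (1 - p) \<le> a / (2*K)"
      have "V y powr (1 - p) * V y powr p \<le> (a / (2*K)) * V y powr p"
        using l by (intro mult_right_mono) auto
      hence "V y \<le> (a / (2*K)) * V y powr p" using e by linarith
      thus ?thesis using K_pos by (intro mult_left_mono) auto
    qed
    hence h2: "K * V y \<le> (a/2) * V y powr p" using K_pos by simp
    have "b * V y powr q \<ge> 0" using abpq by simp
    hence h3: "gradV y \<bullet> f y \<le> - a * V y powr p" using V_decay[rule_format, OF False]
      by linarith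
    show ?thesis using h1 h2 h3 by (simp add: inner_add_right)
  qed
  have keyD0: "gradV y \<bullet> (f y + \<psi> y) \<le> 0" if "V y < \<delta>" for y
  proof -
    have "(a/2) * V y powr p \<ge> 0" using abpq by simp
    thus ?thesis using keyD[OF that] by linarith
  qed
  show ?thesis unfolding fixed_time_stable_def
  proof (intro exI conjI ballI allI impI)
    show "open {y. V y < \<delta>}" using open_Collect_less[OF contV continuous_on_const] .
    show "0 \<in> {y. V y < \<delta>}" using V_pd \<delta>_pos by simp
  next
    fix x0 xs
    assume x0D: "x0 \<in> {y. V y < \<delta>}" and sol: "is_solution (\<lambda>x. f x + \<psi> x) x0 xs"
    define g where "g = (\<lambda>t. V (xs t))"
    define D where "D = (\<lambda>t. gradV (xs t) \<bullet> (f (xs t) + \<psi> (xs t)))"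
    have xder: "\<And>t. t \<ge> 0 \<Longrightarrow> (xs has_vector_derivative (f (xs t) + \<psi> (xs t))) (at t within {0..})"
      using sol unfolding is_solution_def by blast
    have g_0: "g 0 < \<delta>" using sol x0D unfolding is_solution_def g_def by simp
    have xcont: "continuous_on {0..} xs"
      unfolding continuous_on_eq_continuous_within
      by (auto intro!: has_vector_derivative_continuous[OF xder])
    have gcont: "continuous_on {0..} g"
      unfolding g_def using continuous_on_compose2[OF contV xcont] by simp
    have gder: "(g has_real_derivative D t) (at t)" if "t > 0" for t
    proof -
      have "at t within {0..} = at t"
        using that by (intro at_within_interior) (simp add: interior_real_atLeast)
      hence xd: "(xs has_derivative (\<lambda>h. h *\<^sub>R (f (xs t) + \<psi> (xs t)))) (at t)"
        using xder[of t] that unfolding has_vector_derivative_def by simp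
      have "((V \<circ> xs) has_derivative ((\<lambda>h. gradV (xs t) \<bullet> h) \<circ> (\<lambda>h. h *\<^sub>R (f (xs t) + \<psi> (xs t))))) (at t)"
        by (rule diff_chain_at[OF xd V_deriv[rule_format]])
      moreover have "((\<lambda>h. gradV (xs t) \<bullet> h) \<circ> (\<lambda>h. h *\<^sub>R (f (xs t) + \<psi> (xs t)))) = (*) (D t)"
        unfolding D_def by (auto simp: fun_eq_iff)
      ultimately show ?thesis unfolding has_field_derivative_def g_def by (simp add: o_def)
    qed
    have stay_lt: "g r < \<delta>" if "t \<ge> 0" "g t < \<delta>" "r \<ge> t" for t r
    proof (rule ccontr)
      assume "\<not> g r < \<delta>"
      define S where "S = {t..r} \<inter> g -` {\<delta>..}"
      have "continuous_on {t..r} g" using gcont by (rule continuous_on_subset) (use that in auto)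
      hence "closed S" unfolding S_def by (intro continuous_closed_preimage) auto
      moreover have "bounded S" unfolding S_def by (rule bounded_Int) simp
      ultimately have "compact S" using compact_eq_bounded_closed by blast
      moreover have "r \<in> S" using \<open>\<not> g r < \<delta>\<close> that unfolding S_def by auto
      ultimately obtain s0 where s0: "s0 \<in> S" "\<forall>s\<in>S. s0 \<le> s"
        using compact_attains_inf by blast
      have s0t: "t \<le> s0" "g s0 \<ge> \<delta>" using s0 unfolding S_def by auto
      have below: "g s < \<delta>" if "t \<le> s" "s < s0" for s
        using s0(2) that \<open>s0 \<in> S\<close> unfolding S_def by force
      have "g s0 \<le> g t"
      proof (rule nonincr_lemma[where g = g and D = D and u = t and v = s0])
        show "t \<le> s0" by fact
        show "continuous_on {t..s0} g" using gcont by (rule continuous_on_subset) (use \<open>t \<ge> 0\<close> in auto)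
        show "(g has_real_derivative D \<tau>) (at \<tau>)" if "t < \<tau>" "\<tau> < s0" for \<tau>
          using gder that \<open>t \<ge> 0\<close> by simp
        show "D \<tau> \<le> 0" if "t < \<tau>" "\<tau> < s0" for \<tau>
          using keyD0 below[of \<tau>] that unfolding D_def g_def by simp
      qed
      then show False using s0t \<open>g t < \<delta>\<close> by simp
    qed
    have stay: "g s \<le> g t" if "t \<ge> 0" "g t < \<delta>" "s \<ge> t" for t s
    proof (rule nonincr_lemma[where g = g and D = D and u = t and v = s])
      show "t \<le> s" by fact
      show "continuous_on {t..s} g" using gcont by (rule continuous_on_subset) (use \<open>t \<ge> 0\<close> in auto)
      show "(g has_real_derivative D \<tau>) (at \<tau>)" if "t < \<tau>" "\<tau> < s" for \<tau>
        using gder that \<open>t \<ge> 0\<close> by simp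
      show "D \<tau> \<le> 0" if "t < \<tau>" "\<tau> < s" for \<tau>
        using keyD0 stay_lt[of t \<tau>] that \<open>t \<ge> 0\<close> \<open>g t < \<delta>\<close> unfolding D_def g_def by simp
    qed
    have reach: "\<exists>t\<in>{0..T}. g t = 0"
    proof (rule ccontr)
      assume "\<not> ?thesis"
      hence gpos: "g t > 0" if "t \<in> {0..T}" for t
        using that V_nonneg unfolding g_def by (metis less_eq_real_def)
      define h where "h = (\<lambda>t. g t powr (1 - p) + c * t)"
      define Dh where "Dh = (\<lambda>t. (1 - p) * g t powr (1 - p - 1) * D t + c)"
      have "h T \<le> h 0"
      proof (rule nonincr_lemma[where g = h and D = Dh and u = 0 and v = T])
        show "0 \<le> T" using T_pos by simp
        have "continuous_on {0..T} g" using gcont by (rule continuous_on_subset) auto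
        moreover have "\<forall>x\<in>{0..T}. g x \<noteq> 0" using gpos by (metis less_irrefl)
        ultimately show "continuous_on {0..T} h" unfolding h_def
          by (intro continuous_intros continuous_on_powr) auto
        show "(h has_real_derivative Dh \<tau>) (at \<tau>)" if "0 < \<tau>" "\<tau> < T" for \<tau>
        proof -
          have "((\<lambda>t. g t powr (1 - p)) has_real_derivative (1 - p) * g \<tau> powr (1 - p - 1) * D \<tau>) (at \<tau>)"
            using DERIV_chain2[OF has_real_derivative_powr[of "g \<tau>" "1 - p"] gder[of \<tau>]] gpos that
            by simp
          moreover have "((\<lambda>t. c * t) has_real_derivative c) (at \<tau>)"
            using DERIV_cmult_Id by blast
          ultimately show ?thesis unfolding h_def Dh_def by (rule DERIV_add)
        qed
        show "Dh \<tau> \<le> 0" if "0 < \<tau>" "\<tau> < T" for \<tau>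
        proof -
          have gt: "g \<tau> > 0" "g \<tau> < \<delta>" using gpos that stay_lt[of 0 \<tau>] g_0 by auto
          have Dt: "D \<tau> \<le> - (a/2) * g \<tau> powr p" using keyD gt unfolding D_def g_def by simp
          have pos: "(1 - p) * g \<tau> powr (1 - p - 1) > 0" using gt abpq by simp
          have "(1 - p) * g \<tau> powr (1 - p - 1) * D \<tau> \<le> (1 - p) * g \<tau> powr (1 - p - 1) * (- (a/2) * g \<tau> powr p)"
            by (rule mult_left_mono[OF Dt]) (use pos in linarith)
          also have "\<dots> = - (1 - p) * (a/2) * (g \<tau> powr (1 - p - 1) * g \<tau> powr p)" by (simp only: mult_ac mult_minus_left mult_minus_right)
          also have "g \<tau> powr (1 - p - 1) * g \<tau> powr p = 1"
            using gt by (simp add: powr_add[symmetric])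
          finally have "(1 - p) * g \<tau> powr (1 - p - 1) * D \<tau> \<le> - (1 - p) * (a/2) * 1" .
          moreover have "- (1 - p) * (a/2) * 1 = - c" unfolding c_def by (simp add: field_simps)
          ultimately show ?thesis unfolding Dh_def by linarith
        qed
      qed
      moreover have "g 0 powr (1 - p) < \<delta> powr (1 - p)"
        using powr_less_mono2[of "1 - p" "g 0" \<delta>] g_0 abpq V_nonneg unfolding g_def by simp
      moreover have "g T powr (1 - p) \<ge> 0" by simp
      ultimately show False unfolding h_def using cT by simp
    qed
    then obtain t where t: "t \<in> {0..T}" "g t = 0" by blast
    show "\<exists>t\<in>{0..T}. \<forall>s\<ge>t. xs s = 0"
    proof (intro bexI allI impI)
      fix s assume "s \<ge> t"
      hence "g s \<le> 0" using stay[of t s] t \<delta>_pos by simp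
      hence "V (xs s) = 0" using V_nonneg unfolding g_def by (simp add: order_antisym)
      thus "xs s = 0" using V_pd by (metis less_irrefl)
    qed (use t in simp)
  qed
qed

end
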